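(* ${\bf K^\boxdot}$ is sound and strongly complete with respect to the class of all bimodal frames: for every $\Gamma\subseteq\mathcal{L}(\boxdot)$ and $\phi\in\mathcal{L}(\boxdot)$, $\Gamma\vdash_{{\bf K^\boxdot}}\phi$ iff $\phi$ is true at every state of every bimodal model at which all formulas of $\Gamma$ are true.
   Context: Fix a nonempty set $\mathbf{P}$ of propositional variables. A bimodal model is $\langle S,R_1,R_2,V\rangle$ with $S$ nonempty, $R_1,R_2\subseteq S\times S$, $V:\mathbf{P}\to\mathcal{P}(S)$. $\mathcal{L}(\boxdot):\ \phi::=p\mid\neg\phi\mid(\phi\wedge\phi)\mid\boxdot\phi$ (other connectives, $\top,\bot$ abbreviations). Truth: $\mathcal{M},s\vDash\boxdot\phi$ iff for all $t,u$ with $sR_1t$ and $sR_2u$, ($\mathcal{M},t\vDash\phi\iff\mathcal{M},u\vDash\phi$); atoms and Booleans as usual. ${\bf K^\boxdot}$ has axioms: all instances of propositional tautologies; $\boxdot\top$; $\boxdot\phi\leftrightarrow\boxdot\neg\phi$; $\boxdot\phi\wedge\boxdot\psi\to\boxdot(\phi\wedge\psi)$; $\boxdot\phi\to\boxdot(\phi\vee\psi)\vee\boxdot(\neg\phi\vee\chi)$; and rules: modus ponens and RE: from $\phi\leftrightarrow\psi$ infer $\boxdot\phi\leftrightarrow\boxdot\psi$. *)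

theory Defs
  imports Main
begin

text \<open>Formulas of L(boxdot) over propositional variables of type 'p
  (the type 'p plays the role of the nonempty set P).\<close>
datatype 'p fm = Atom 'p | Neg "'p fm" | Conj "'p fm" "'p fm" | Dot "'p fm"

definition Disj :: "'p fm \<Rightarrow> 'p fm \<Rightarrow> 'p fm" where
  "Disj a b = Neg (Conj (Neg a) (Neg b))"
definition Imp :: "'p fm \<Rightarrow> 'p fm \<Rightarrow> 'p fm" where
  "Imp a b = Neg (Conj a (Neg b))"
definition Iff :: "'p fm \<Rightarrow> 'p fm \<Rightarrow> 'p fm" where
  "Iff a b = Conj (Imp a b) (Imp b a)"
definition Bot :: "'p fm" where
  "Bot = Conj (Atom undefined) (Neg (Atom undefined))"
definition Top :: "'p fm" where
  "Top = Neg Bot"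

text \<open>Propositional tautologies: true under every Boolean valuation that treats
  atoms and boxdot-formulas as propositional letters.\<close>
fun peval :: "('p fm \<Rightarrow> bool) \<Rightarrow> 'p fm \<Rightarrow> bool" where
  "peval v (Atom p) = v (Atom p)"
| "peval v (Neg a) = (\<not> peval v a)"
| "peval v (Conj a b) = (peval v a \<and> peval v b)"
| "peval v (Dot a) = v (Dot a)"

definition taut :: "'p fm \<Rightarrow> bool" where
  "taut \<phi> \<longleftrightarrow> (\<forall>v. peval v \<phi>)"

inductive Kthm :: "'p fm \<Rightarrow> bool" where
  Taut: "taut \<phi> \<Longrightarrow> Kthm \<phi>"
| DotTop: "Kthm (Dot Top)"
| DotNeg: "Kthm (Iff (Dot \<phi>) (Dot (Neg \<phi>)))"
| DotConj: "Kthm (Imp (Conj (Dot \<phi>) (Dot \<psi>)) (Dot (Conj \<phi> \<psi>)))"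
| DotDisj: "Kthm (Imp (Dot \<phi>) (Disj (Dot (Disj \<phi> \<psi>)) (Dot (Disj (Neg \<phi>) \<chi>))))"
| MP: "Kthm \<phi> \<Longrightarrow> Kthm (Imp \<phi> \<psi>) \<Longrightarrow> Kthm \<psi>"
| RE: "Kthm (Iff \<phi> \<psi>) \<Longrightarrow> Kthm (Iff (Dot \<phi>) (Dot \<psi>))"

fun conjs :: "'p fm list \<Rightarrow> 'p fm" where
  "conjs [] = Top"
| "conjs (a # as) = Conj a (conjs as)"

definition derives :: "'p fm set \<Rightarrow> 'p fm \<Rightarrow> bool" where
  "derives \<Gamma> \<phi> \<longleftrightarrow> (\<exists>ps. set ps \<subseteq> \<Gamma> \<and> Kthm (Imp (conjs ps) \<phi>))"

text \<open>Bimodal models: state set = the (nonempty) type 's, two relations R1 R2,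
  valuation V.\<close>
fun sat :: "('s \<Rightarrow> 's \<Rightarrow> bool) \<Rightarrow> ('s \<Rightarrow> 's \<Rightarrow> bool) \<Rightarrow> ('p \<Rightarrow> 's set) \<Rightarrow> 's \<Rightarrow> 'p fm \<Rightarrow> bool" where
  "sat R1 R2 V s (Atom p) = (s \<in> V p)"
| "sat R1 R2 V s (Neg a) = (\<not> sat R1 R2 V s a)"
| "sat R1 R2 V s (Conj a b) = (sat R1 R2 V s a \<and> sat R1 R2 V s b)"
| "sat R1 R2 V s (Dot a) =
     (\<forall>t u. R1 s t \<longrightarrow> R2 s u \<longrightarrow> (sat R1 R2 V t a \<longleftrightarrow> sat R1 R2 V u a))"

definition consequence :: "'s itself \<Rightarrow> 'p fm set \<Rightarrow> 'p fm \<Rightarrow> bool" where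
  "consequence _ \<Gamma> \<phi> \<longleftrightarrow>
     (\<forall>(R1 :: 's \<Rightarrow> 's \<Rightarrow> bool) R2 V s. (\<forall>\<psi>\<in>\<Gamma>. sat R1 R2 V s \<psi>) \<longrightarrow> sat R1 R2 V s \<phi>)"

end

theory Submission
  imports Defs "HOL.Zorn"
begin

lemma pev[simp]:
  "peval v (Imp a b) = (peval v a \<longrightarrow> peval v b)"
  "peval v (Iff a b) = (peval v a \<longleftrightarrow> peval v b)"
  "peval v (Disj a b) = (peval v a \<or> peval v b)"
  "peval v Bot = False" "peval v Top = True"
  by (auto simp: Imp_def Iff_def Disj_def Bot_def Top_def)

lemma pev_conjs[simp]: "peval v (conjs ps) = (\<forall>a\<in>set ps. peval v a)"
  by (induct ps) auto

lemma tc: "Kthm a \<Longrightarrow> (\<And>v. peval v a \<Longrightarrow> peval v b) \<Longrightarrow> Kthm b"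
  by (rule MP[of a], assumption, rule Taut, auto simp: taut_def)

lemma Kconj: "Kthm a \<Longrightarrow> Kthm b \<Longrightarrow> Kthm (Conj a b)"
proof -
  assume a: "Kthm a" and b: "Kthm b"
  have "Kthm (Imp a (Imp b (Conj a b)))" by (rule Taut) (auto simp: taut_def)
  with a have "Kthm (Imp b (Conj a b))" by (rule MP)
  with b show ?thesis by (rule MP)
qed

lemma tc2: "Kthm a \<Longrightarrow> Kthm b \<Longrightarrow> (\<And>v. peval v a \<Longrightarrow> peval v b \<Longrightarrow> peval v c) \<Longrightarrow> Kthm c"
proof -
  assume a: "Kthm a" and b: "Kthm b" and h: "\<And>v. peval v a \<Longrightarrow> peval v b \<Longrightarrow> peval v c"
  show "Kthm c" by (rule tc[OF Kconj[OF a b]]) (simp add: h)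
qed

lemma ttaut: "(\<And>v. peval v a) \<Longrightarrow> Kthm a"
  by (rule Taut) (auto simp: taut_def)

lemma sat_simps[simp]:
  "sat R1 R2 V s (Imp a b) = (sat R1 R2 V s a \<longrightarrow> sat R1 R2 V s b)"
  "sat R1 R2 V s (Iff a b) = (sat R1 R2 V s a \<longleftrightarrow> sat R1 R2 V s b)"
  "sat R1 R2 V s (Disj a b) = (sat R1 R2 V s a \<or> sat R1 R2 V s b)"
  "sat R1 R2 V s Bot = False" "sat R1 R2 V s Top = True"
  by (auto simp: Imp_def Iff_def Disj_def Bot_def Top_def)

lemma sat_conjs[simp]: "sat R1 R2 V s (conjs ps) = (\<forall>a\<in>set ps. sat R1 R2 V s a)"
  by (induct ps) auto

lemma sat_peval: "sat R1 R2 V s \<phi> = peval (sat R1 R2 V s) \<phi>"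
  by (induct \<phi>) auto

lemma soundK: "Kthm \<phi> \<Longrightarrow> sat R1 R2 V s \<phi>"
proof (induct \<phi> arbitrary: s rule: Kthm.induct)
  case (Taut \<phi>) thus ?case by (simp add: taut_def sat_peval)
next
  case (DotDisj \<phi> \<psi> \<chi>) thus ?case by simp blast
next
  case (MP \<phi> \<psi>) thus ?case by simp
next
  case (RE \<phi> \<psi>) thus ?case by simp
qed auto

definition cons :: "'p fm set \<Rightarrow> bool" where "cons S \<longleftrightarrow> \<not> derives S Bot"
definition MCS :: "'p fm set \<Rightarrow> bool" where
  "MCS S \<longleftrightarrow> cons S \<and> (\<forall>\<phi>. cons (insert \<phi> S) \<longrightarrow> \<phi> \<in> S)"

lemma incons_filter:
  assumes "\<not> cons (insert a S)"
  obtains qs where "set qs \<subseteq> S" "Kthm (Imp (conjs qs) (Neg a))"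
proof -
  from assms obtain ps where ps: "set ps \<subseteq> insert a S" "Kthm (Imp (conjs ps) Bot)"
    by (auto simp: cons_def derives_def)
  let ?qs = "filter (\<lambda>x. x \<noteq> a) ps"
  have "set ?qs \<subseteq> S" using ps by auto
  moreover have "Kthm (Imp (conjs ?qs) (Neg a))"
    by (rule tc[OF ps(2)]) auto
  ultimately show ?thesis using that by blast
qed

lemma mcs_derive:
  assumes M: "MCS M" and ps: "set ps \<subseteq> M" and k: "Kthm (Imp (conjs ps) \<phi>)"
  shows "\<phi> \<in> M"
proof (rule ccontr)
  assume "\<phi> \<notin> M"
  with M have "\<not> cons (insert \<phi> M)" by (auto simp: MCS_def)
  then obtain qs where qs: "set qs \<subseteq> M" "Kthm (Imp (conjs qs) (Neg \<phi>))" by (rule incons_filter)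
  have "Kthm (Imp (conjs (ps @ qs)) Bot)" by (rule tc2[OF k qs(2)]) auto
  hence "derives M Bot" using ps qs unfolding derives_def by (intro exI[of _ "ps @ qs"]) auto
  with M show False by (auto simp: MCS_def cons_def)
qed

lemma mcs_thm: "MCS M \<Longrightarrow> Kthm \<phi> \<Longrightarrow> \<phi> \<in> M"
  by (rule mcs_derive[of M "[]"]) (auto elim: tc)

lemma mcs_mp: "MCS M \<Longrightarrow> a \<in> M \<Longrightarrow> Kthm (Imp a b) \<Longrightarrow> b \<in> M"
  by (rule mcs_derive[of M "[a]"]) (auto elim: tc)

lemma mcs_mp2: "MCS M \<Longrightarrow> a \<in> M \<Longrightarrow> b \<in> M \<Longrightarrow> Kthm (Imp a (Imp b c)) \<Longrightarrow> c \<in> M"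
  by (rule mcs_derive[of M "[a,b]"]) (auto elim: tc)

lemma mcs_neg: assumes M: "MCS M" shows "Neg a \<in> M \<longleftrightarrow> a \<notin> M"
proof (intro iffI notI)
  assume "Neg a \<in> M" "a \<in> M"
  moreover have "Kthm (Imp (conjs [a, Neg a]) Bot)" by (rule ttaut) simp
  ultimately have "derives M Bot" unfolding derives_def by (intro exI[of _ "[a, Neg a]"]) auto
  with M show False by (auto simp: MCS_def cons_def)
next
  assume "a \<notin> M"
  with M have "\<not> cons (insert a M)" by (auto simp: MCS_def)
  then obtain qs where "set qs \<subseteq> M" "Kthm (Imp (conjs qs) (Neg a))" by (rule incons_filter)
  thus "Neg a \<in> M" using M mcs_derive by blast
qed

lemma mcs_conj: assumes M: "MCS M" shows "Conj a b \<in> M \<longleftrightarrow> a \<in> M \<and> b \<in> M"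
proof -
  have 1: "Kthm (Imp (Conj a b) a)" "Kthm (Imp (Conj a b) b)" "Kthm (Imp a (Imp b (Conj a b)))"
    by (rule ttaut, simp)+
  show ?thesis using mcs_mp[OF M _ 1(1)] mcs_mp[OF M _ 1(2)] mcs_mp2[OF M _ _ 1(3)] by blast
qed

lemma lindenbaum: assumes "cons S" shows "\<exists>M. S \<subseteq> M \<and> MCS M"
proof -
  let ?A = "{T. S \<subseteq> T \<and> cons T}"
  have "\<exists>M\<in>?A. \<forall>X\<in>?A. M \<subseteq> X \<longrightarrow> X = M"
  proof (rule subset_Zorn_nonempty)
    show "?A \<noteq> {}" using assms by auto
  next
    fix C assume C: "C \<noteq> {}" "subset.chain ?A C"
    have "cons (\<Union>C)"
    proof (unfold cons_def derives_def, rule notI, elim exE conjE)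
      fix ps assume ps: "set ps \<subseteq> \<Union>C" "Kthm (Imp (conjs ps) Bot)"
      obtain B where "B \<in> C" "set ps \<subseteq> B"
        using finite_subset_Union_chain[OF _ ps(1) C(1) C(2)] by blast
      moreover have "cons B" using C `B \<in> C` by (auto simp: subset.chain_def)
      ultimately show False using ps by (auto simp: cons_def derives_def)
    qed
    moreover have "S \<subseteq> \<Union>C" using C unfolding subset.chain_def by blast
    ultimately show "\<Union>C \<in> ?A" by simp
  qed
  then obtain M where M: "M \<in> ?A" "\<forall>X\<in>?A. M \<subseteq> X \<longrightarrow> X = M" by blast
  have "MCS M" unfolding MCS_def
  proof (intro conjI allI impI)
    show "cons M" using M by simp
    fix \<phi> assume "cons (insert \<phi> M)"
    hence "insert \<phi> M \<in> ?A" using M by auto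
    with M show "\<phi> \<in> M" by blast
  qed
  thus ?thesis using M by auto
qed

definition FF :: "'p fm set \<Rightarrow> 'p fm set" where
  "FF G = {\<phi>. \<forall>\<psi>. Dot (Disj \<phi> \<psi>) \<in> G}"

definition CR :: "'p fm set \<Rightarrow> 'p fm set \<Rightarrow> bool" where
  "CR G D \<longleftrightarrow> MCS D \<and> FF G \<subseteq> D"

definition CV :: "'p \<Rightarrow> 'p fm set set" where
  "CV p = {G. Atom p \<in> G}"

lemma mcs_RE: "MCS G \<Longrightarrow> Kthm (Iff a b) \<Longrightarrow> Dot a \<in> G \<Longrightarrow> Dot b \<in> G"
proof -
  assume G: "MCS G" and k: "Kthm (Iff a b)" and d: "Dot a \<in> G"
  have "Kthm (Imp (Dot a) (Dot b))" by (rule tc[OF RE[OF k]]) simp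
  thus ?thesis by (rule mcs_mp[OF G d])
qed

lemma FF_Top: "MCS G \<Longrightarrow> Top \<in> FF G"
proof -
  assume G: "MCS G"
  have "Dot (Disj Top \<psi>) \<in> G" for \<psi>
  proof (rule mcs_RE[OF G _ mcs_thm[OF G DotTop]])
    show "Kthm (Iff Top (Disj Top \<psi>))" by (rule ttaut) simp
  qed
  thus ?thesis by (simp add: FF_def)
qed

lemma FF_conj: assumes G: "MCS G" and a: "a \<in> FF G" and b: "b \<in> FF G" shows "Conj a b \<in> FF G"
  unfolding FF_def
proof (intro CollectI allI)
  fix \<psi>
  have "Dot (Disj a \<psi>) \<in> G" "Dot (Disj b \<psi>) \<in> G" using a b by (auto simp: FF_def)
  moreover have "Kthm (Imp (Dot (Disj a \<psi>)) (Imp (Dot (Disj b \<psi>)) (Dot (Conj (Disj a \<psi>) (Disj b \<psi>)))))"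
    by (rule tc[OF DotConj[of "Disj a \<psi>" "Disj b \<psi>"]]) simp
  ultimately have "Dot (Conj (Disj a \<psi>) (Disj b \<psi>)) \<in> G" using mcs_mp2[OF G] by blast
  thus "Dot (Disj (Conj a b) \<psi>) \<in> G" by (rule mcs_RE[OF G, rotated]) (rule ttaut, auto)
qed

lemma FF_conjs: "MCS G \<Longrightarrow> set ps \<subseteq> FF G \<Longrightarrow> conjs ps \<in> FF G"
proof (induct ps)
  case Nil thus ?case using FF_Top by simp
next
  case (Cons a ps) thus ?case using FF_conj[OF Cons.prems(1)] by simp
qed

lemma FF_mono: assumes G: "MCS G" and c: "c \<in> FF G" and k: "Kthm (Imp c \<phi>)" shows "\<phi> \<in> FF G"
  unfolding FF_def
proof (intro CollectI allI)
  fix \<psi>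
  have "Dot (Disj c (Disj \<phi> \<psi>)) \<in> G" using c by (auto simp: FF_def)
  thus "Dot (Disj \<phi> \<psi>) \<in> G" by (rule mcs_RE[OF G, rotated]) (rule tc[OF k], auto)
qed

lemma FF_cons: assumes G: "MCS G" and n: "Neg a \<notin> FF G" shows "cons (insert a (FF G))"
proof (rule ccontr)
  assume "\<not> cons (insert a (FF G))"
  then obtain qs where "set qs \<subseteq> FF G" "Kthm (Imp (conjs qs) (Neg a))" by (rule incons_filter)
  hence "Neg a \<in> FF G" using FF_mono[OF G FF_conjs[OF G]] by blast
  with n show False by simp
qed

lemma truth: "MCS G \<Longrightarrow> sat CR CR CV G \<phi> \<longleftrightarrow> \<phi> \<in> G"
proof (induct \<phi> arbitrary: G)
  case (Atom p) thus ?case by (simp add: CV_def)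
next
  case (Neg \<phi>) thus ?case using Neg.hyps[OF Neg.prems] mcs_neg[OF Neg.prems, of \<phi>] by (simp only: sat.simps)
next
  case (Conj \<phi>1 \<phi>2) thus ?case using Conj.hyps(1)[OF Conj.prems] Conj.hyps(2)[OF Conj.prems] mcs_conj[OF Conj.prems, of \<phi>1 \<phi>2] by (simp only: sat.simps)
next
  case (Dot \<phi>)
  note G = Dot.prems
  show ?case
  proof
    assume s: "sat CR CR CV G (Dot \<phi>)"
    show "Dot \<phi> \<in> G"
    proof (rule ccontr)
      assume nd: "Dot \<phi> \<notin> G"
      have n1: "\<phi> \<notin> FF G"
      proof
        assume "\<phi> \<in> FF G"
        hence "Dot (Disj \<phi> \<phi>) \<in> G" by (auto simp: FF_def)
        hence "Dot \<phi> \<in> G" by (rule mcs_RE[OF G, rotated]) (rule ttaut, auto)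
        with nd show False by simp
      qed
      have n2: "Neg \<phi> \<notin> FF G"
      proof
        assume "Neg \<phi> \<in> FF G"
        hence "Dot (Disj (Neg \<phi>) (Neg \<phi>)) \<in> G" by (auto simp: FF_def)
        hence "Dot (Neg \<phi>) \<in> G" by (rule mcs_RE[OF G, rotated]) (rule ttaut, auto)
        hence "Dot \<phi> \<in> G" by (rule mcs_mp[OF G]) (rule tc[OF DotNeg[of \<phi>]], auto)
        with nd show False by simp
      qed
      have n3: "Neg (Neg \<phi>) \<notin> FF G"
      proof
        assume "Neg (Neg \<phi>) \<in> FF G"
        moreover have "Kthm (Imp (Neg (Neg \<phi>)) \<phi>)" by (rule ttaut) simp
        ultimately have "\<phi> \<in> FF G" by (rule FF_mono[OF G])
        with n1 show False by simp
      qed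
      obtain D1 where D1: "insert (Neg \<phi>) (FF G) \<subseteq> D1" "MCS D1"
        using lindenbaum[OF FF_cons[OF G n3]] by blast
      obtain D2 where D2: "insert \<phi> (FF G) \<subseteq> D2" "MCS D2"
        using lindenbaum[OF FF_cons[OF G n2]] by blast
      have "CR G D1" "CR G D2" using D1 D2 by (auto simp: CR_def)
      with s have "sat CR CR CV D1 \<phi> \<longleftrightarrow> sat CR CR CV D2 \<phi>" unfolding sat.simps(4) by blast
      hence "\<phi> \<in> D1 \<longleftrightarrow> \<phi> \<in> D2" using Dot.hyps[OF D1(2)] Dot.hyps[OF D2(2)] by blast
      moreover have "\<phi> \<notin> D1" using D1 mcs_neg[OF D1(2)] by blast
      ultimately show False using D2 by blast
    qed
  next
    assume d: "Dot \<phi> \<in> G"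
    have FFd: "Neg \<phi> \<in> FF G \<or> \<phi> \<in> FF G"
    proof (rule disjCI)
      assume "\<phi> \<notin> FF G"
      then obtain \<psi>0 where p0: "Dot (Disj \<phi> \<psi>0) \<notin> G" by (auto simp: FF_def)
      show "Neg \<phi> \<in> FF G" unfolding FF_def
      proof (intro CollectI allI)
        fix \<chi>
        have "Disj (Dot (Disj \<phi> \<psi>0)) (Dot (Disj (Neg \<phi>) \<chi>)) \<in> G"
          by (rule mcs_mp[OF G d DotDisj])
        hence "Neg (Conj (Neg (Dot (Disj \<phi> \<psi>0))) (Neg (Dot (Disj (Neg \<phi>) \<chi>)))) \<in> G"
          by (simp only: Disj_def[of "Dot _"])
        hence "Dot (Disj \<phi> \<psi>0) \<in> G \<or> Dot (Disj (Neg \<phi>) \<chi>) \<in> G"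
          unfolding mcs_neg[OF G] mcs_conj[OF G] by blast
        with p0 show "Dot (Disj (Neg \<phi>) \<chi>) \<in> G" by simp
      qed
    qed
    show "sat CR CR CV G (Dot \<phi>)"
    proof (simp only: sat.simps, intro allI impI)
      fix t u assume t: "CR G t" and u: "CR G u"
      hence tm: "MCS t" "FF G \<subseteq> t" and um: "MCS u" "FF G \<subseteq> u" by (auto simp: CR_def)
      have "\<phi> \<in> t \<longleftrightarrow> \<phi> \<in> u"
        using FFd tm um mcs_neg[OF tm(1)] mcs_neg[OF um(1)] by blast
      thus "sat CR CR CV t \<phi> \<longleftrightarrow> sat CR CR CV u \<phi>" using Dot.hyps[OF tm(1)] Dot.hyps[OF um(1)] by blast
    qed
  qed
qed

theorem theorem7:
  fixes \<Gamma> :: "'p fm set" and \<phi> :: "'p fm"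
  shows "(derives \<Gamma> \<phi> \<longrightarrow> consequence TYPE('s) \<Gamma> \<phi>)
       \<and> (consequence TYPE('p fm set) \<Gamma> \<phi> \<longrightarrow> derives \<Gamma> \<phi>)"
proof (intro conjI impI)
  assume "derives \<Gamma> \<phi>"
  then obtain ps where ps: "set ps \<subseteq> \<Gamma>" "Kthm (Imp (conjs ps) \<phi>)" by (auto simp: derives_def)
  show "consequence TYPE('s) \<Gamma> \<phi>" unfolding consequence_def
  proof (intro allI impI)
    fix R1 R2 :: "'s \<Rightarrow> 's \<Rightarrow> bool" and V s
    assume "\<forall>\<psi>\<in>\<Gamma>. sat R1 R2 V s \<psi>"
    hence "sat R1 R2 V s (conjs ps)" using ps(1) by auto
    moreover have "sat R1 R2 V s (Imp (conjs ps) \<phi>)" by (rule soundK[OF ps(2)])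
    ultimately show "sat R1 R2 V s \<phi>" by simp
  qed
next
  assume c: "consequence TYPE('p fm set) \<Gamma> \<phi>"
  show "derives \<Gamma> \<phi>"
  proof (rule ccontr)
    assume nd: "\<not> derives \<Gamma> \<phi>"
    have "cons (insert (Neg \<phi>) \<Gamma>)"
    proof (rule ccontr)
      assume "\<not> cons (insert (Neg \<phi>) \<Gamma>)"
      then obtain qs where qs: "set qs \<subseteq> \<Gamma>" "Kthm (Imp (conjs qs) (Neg (Neg \<phi>)))" by (rule incons_filter)
      have "Kthm (Imp (conjs qs) \<phi>)" by (rule tc[OF qs(2)]) simp
      with qs(1) nd show False by (auto simp: derives_def)
    qed
    then obtain M where M: "insert (Neg \<phi>) \<Gamma> \<subseteq> M" "MCS M" using lindenbaum by blast
    have "\<forall>\<psi>\<in>\<Gamma>. sat CR CR CV M \<psi>" using M truth[OF M(2)] by blast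
    hence "sat CR CR CV M \<phi>" using c unfolding consequence_def by blast
    hence "\<phi> \<in> M" using truth[OF M(2)] by blast
    moreover have "Neg \<phi> \<in> M" using M by blast
    ultimately show False using mcs_neg[OF M(2)] by blast
  qed
qed

end
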